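(* Let $d\ge1$, $0<\epsilon<1$, and let $C_1,\ldots,C_n\in\mathbb{R}^{d+1}$ be a Pareto-optimal market for $\textsc{ProductDesign}(d)$. Let $r=\max\{\operatorname{ppu}(C_i): i\in\{1,\ldots,n\}\}$, $E=1/(1-\epsilon)$, $\ell=\lceil\log_E n\rceil$, and for $i\in\{0,\ldots,\ell\}$ let $H_i=\{(p,q_1,\ldots,q_d): p-\sum_{k=1}^d q_k=r(1-\epsilon)^i\}$. Then for every product $P^*=(p^*,q_1^*,\ldots,q_d^* )$ there exists a product $P\in H_i$ for some $i\in\{0,\ldots,\ell\}$ with $\operatorname{profit}(P)\ge(1-\epsilon)\operatorname{profit}(P^* )$.
   Context: A product $P=(p,q_1,\ldots,q_d)$ has price $p$ and qualities $q_k$; $\operatorname{ppu}(P)=p-\sum_k q_k$. Customer $C_i=(p_i,q_{i,1},\ldots,q_{i,d})$ buys $P$ iff $p\le p_i$ and $q_k\ge q_{i,k}$ for all $k$. $\operatorname{profit}(P)=\operatorname{ppu}(P)\cdot|\{i: C_i\text{ buys }P\}|$. Pareto-optimal: no two customers $C_i,C_j$ with $q_{i,k}>q_{j,k}$ for all $k$ and $p_i<p_j$. *)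

theory Defs
  imports Complex_Main
begin

text \<open>A point of R^(d+1) is represented as a pair (p, q) of a price p and a quality
  vector q, of which only the coordinates q 0, ..., q (d-1) are relevant.
  Customers are indexed by 0, ..., n-1.\<close>

type_synonym point = "real \<times> (nat \<Rightarrow> real)"

definition ppu :: "nat \<Rightarrow> point \<Rightarrow> real" where
  "ppu d P = fst P - (\<Sum>k<d. snd P k)"

definition buys :: "nat \<Rightarrow> point \<Rightarrow> point \<Rightarrow> bool" where
  "buys d C P \<longleftrightarrow> fst P \<le> fst C \<and> (\<forall>k<d. snd P k \<ge> snd C k)"

definition profit :: "nat \<Rightarrow> nat \<Rightarrow> (nat \<Rightarrow> point) \<Rightarrow> point \<Rightarrow> real" where
  "profit d n C P = ppu d P * real (card {i. i < n \<and> buys d (C i) P})"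

definition pareto_optimal :: "nat \<Rightarrow> nat \<Rightarrow> (nat \<Rightarrow> point) \<Rightarrow> bool" where
  "pareto_optimal d n C \<longleftrightarrow>
     \<not> (\<exists>i<n. \<exists>j<n. (\<forall>k<d. snd (C i) k > snd (C j) k) \<and> fst (C i) < fst (C j))"

end

theory Submission
  imports Defs
begin

definition buyers :: "nat \<Rightarrow> nat \<Rightarrow> (nat \<Rightarrow> point) \<Rightarrow> point \<Rightarrow> nat set" where
  "buyers d n C P = {i. i < n \<and> buys d (C i) P}"

lemma buyers_fin: "finite (buyers d n C P)"
  unfolding buyers_def by auto

lemma buyers_le: "card (buyers d n C P) \<le> n"
proof -
  have "buyers d n C P \<subseteq> {..<n}" unfolding buyers_def by auto
  then show ?thesis using card_mono[of "{..<n}"] by fastforce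
qed

lemma lower:
  assumes "t \<le> ppu d P'"
  shows "ppu d (fst P' - (ppu d P' - t), snd P') = t"
    and "card (buyers d n C P') \<le> card (buyers d n C (fst P' - (ppu d P' - t), snd P'))"
proof -
  show "ppu d (fst P' - (ppu d P' - t), snd P') = t" by (simp add: ppu_def)
  have "buyers d n C P' \<subseteq> buyers d n C (fst P' - (ppu d P' - t), snd P')"
    using assms unfolding buyers_def buys_def by auto
  then show "card (buyers d n C P') \<le> card (buyers d n C (fst P' - (ppu d P' - t), snd P'))"
    by (rule card_mono[OF buyers_fin])
qed

lemma sum_ind0: fixes d :: nat shows "(\<Sum>k<d. if k = 0 then x else (0::real)) = (if 0 < d then x else 0)"
  by (induction d) auto

lemma sum_ind: fixes d :: nat shows "0 < d \<Longrightarrow> (\<Sum>k<d. if k = 0 then x else (0::real)) = x"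
  using sum_ind0 by simp

theorem lemma4:
  fixes d n :: nat and eps :: real and C :: "nat \<Rightarrow> point"
  assumes "d \<ge> 1" and "0 < eps" and "eps < 1" and "n \<ge> 1"
    and "pareto_optimal d n C"
  defines "r \<equiv> Max ((\<lambda>i. ppu d (C i)) ` {..<n})"
    and "E \<equiv> 1 / (1 - eps)"
  defines "L \<equiv> nat \<lceil>log E (real n)\<rceil>"
  shows "\<forall>Pstar :: point. \<exists>i \<le> L. \<exists>P :: point.
           ppu d P = r * (1 - eps) ^ i \<and>
           profit d n C P \<ge> (1 - eps) * profit d n C Pstar"
proof
  fix Ps :: point
  have prof: "profit d n C P = ppu d P * real (card (buyers d n C P))" for P
    unfolding profit_def buyers_def by simp
  have fin: "finite ((\<lambda>i. ppu d (C i)) ` {..<n})" "((\<lambda>i. ppu d (C i)) ` {..<n}) \<noteq> {}"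
    using assms(4) by (auto simp: lessThan_empty_iff)
  have rge: "ppu d (C j) \<le> r" if "j < n" for j
    unfolding r_def using fin that by (intro Max_ge) auto
  obtain j0 where j0: "j0 < n" "ppu d (C j0) = r"
    using Max_in[OF fin] unfolding r_def by auto
  let ?a = "ppu d Ps" let ?m = "card (buyers d n C Ps)"
  show "\<exists>i \<le> L. \<exists>P :: point. ppu d P = r * (1 - eps) ^ i \<and>
           profit d n C P \<ge> (1 - eps) * profit d n C Ps"
  proof (cases "profit d n C Ps \<le> 0")
    case True
    define p where "p = Max (fst ` C ` {..<n}) + 1"
    define P :: point where "P = (p, \<lambda>k. if k = 0 then p - r else 0)"
    have "ppu d P = r" unfolding P_def ppu_def using sum_ind[of d "p - r"] assms(1) by simp
    moreover have "buyers d n C P = {}"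
    proof -
      have "fst (C i) < p" if "i < n" for i
      proof -
        have "fst (C i) \<le> Max (fst ` C ` {..<n})" using that by (intro Max_ge) auto
        then show ?thesis unfolding p_def by simp
      qed
      then show ?thesis unfolding buyers_def buys_def P_def by force
    qed
    ultimately have "ppu d P = r * (1 - eps) ^ 0 \<and> profit d n C P \<ge> (1 - eps) * profit d n C Ps"
      using True assms(3) by (simp add: prof mult_nonneg_nonpos)
    then show ?thesis by blast
  next
    case False
    then have pos: "?a * ?m > 0" using prof by simp
    have mpos: "?m > 0"
    proof (rule ccontr)
      assume "\<not> ?m > 0" then have "?m = 0" by simp
      then show False using pos by simp
    qed
    have apos: "?a > 0" using pos mpos by (simp add: zero_less_mult_iff)
    from mpos have "buyers d n C Ps \<noteq> {}" by (metis card.empty less_irrefl)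
    then obtain j where j: "j \<in> buyers d n C Ps" by blast
    then have jn: "j < n" and jb: "buys d (C j) Ps" unfolding buyers_def by auto
    have "sum (snd (C j)) {..<d} \<le> sum (snd Ps) {..<d}"
      using jb unfolding buys_def by (intro sum_mono) auto
    then have "?a \<le> ppu d (C j)" using jb unfolding ppu_def buys_def by simp
    then have ar: "?a \<le> r" using rge[OF jn] by simp
    then have rpos: "r > 0" using apos by simp
    have E1: "E > 1" unfolding E_def using assms(2,3) by simp
    have "log E (real n) \<ge> 0" using E1 assms(4) by simp
    then have "real L \<ge> log E (real n)" unfolding L_def by linarith
    then have "E powr real L \<ge> E powr log E (real n)" using E1 by simp
    then have "E ^ L \<ge> real n" using E1 assms(4) by (simp add: powr_realpow)
    moreover have "(1 - eps) ^ L = 1 / E ^ L" unfolding E_def by (simp add: power_one_over)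
    moreover have "E ^ L > 0" using E1 by simp
    ultimately have pl: "(1 - eps) ^ L * real n \<le> 1"
      by (simp add: pos_divide_le_eq)
    show ?thesis
    proof (cases "r * (1 - eps) ^ L \<le> ?a")
      case True
      define i where "i = (LEAST i. r * (1 - eps) ^ i \<le> ?a)"
      have iL: "i \<le> L" unfolding i_def using True by (rule Least_le)
      have ti: "r * (1 - eps) ^ i \<le> ?a" unfolding i_def using True by (rule LeastI)
      have tlo: "(1 - eps) * ?a \<le> r * (1 - eps) ^ i"
      proof (cases i)
        case 0
        then show ?thesis using ti ar apos assms(2) by simp
      next
        case (Suc k)
        have "k < i" using Suc by simp
        then have "\<not> r * (1 - eps) ^ k \<le> ?a" unfolding i_def by (rule not_less_Least)
        then have "(1 - eps) * ?a \<le> (1 - eps) * (r * (1 - eps) ^ k)"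
          using assms(3) by (intro mult_left_mono) auto
        then show ?thesis using Suc by (simp add: algebra_simps)
      qed
      define P where "P = (fst Ps - (ppu d Ps - r * (1 - eps) ^ i), snd Ps)"
      have P1: "ppu d P = r * (1 - eps) ^ i" and P2: "?m \<le> card (buyers d n C P)"
        using lower(1)[OF ti] lower(2)[where n=n and C=C, OF ti] unfolding P_def by auto
      have tnn: "r * (1 - eps) ^ i \<ge> 0" using tlo apos assms(3) mult_pos_pos[of "1-eps" "ppu d Ps"] by linarith
      have "(1 - eps) * profit d n C Ps = ((1 - eps) * ?a) * ?m" by (simp add: prof)
      also have "\<dots> \<le> (r * (1 - eps) ^ i) * ?m" using tlo by (intro mult_right_mono) auto
      also have "\<dots> \<le> (r * (1 - eps) ^ i) * card (buyers d n C P)" using P2 tnn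
        by (intro mult_left_mono) auto
      also have "\<dots> = profit d n C P" using P1 by (simp add: prof)
      finally show ?thesis using iL P1 by blast
    next
      case False
      have "profit d n C Ps = ?a * ?m" by (simp add: prof)
      also have "\<dots> \<le> (r * (1 - eps) ^ L) * ?m" using False by (intro mult_right_mono) auto
      also have "\<dots> \<le> (r * (1 - eps) ^ L) * n" using buyers_le[where d=d and n=n and C=C and P=Ps] rpos assms(3)
        by (intro mult_left_mono) auto
      also have "\<dots> \<le> r" proof -
        have "r * ((1 - eps) ^ L * n) \<le> r * 1" using pl rpos by (intro mult_left_mono) auto
        then show ?thesis by (simp add: mult.assoc)
      qed
      finally have pr: "profit d n C Ps \<le> r" .
      have "j0 \<in> buyers d n C (C j0)" using j0 unfolding buyers_def buys_def by auto
      then have "card (buyers d n C (C j0)) \<ge> 1"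
        using buyers_fin by (metis One_nat_def Suc_leI card_gt_0_iff empty_iff)
      then have "profit d n C (C j0) \<ge> r" using rpos j0 by (simp add: prof)
      moreover have "(1 - eps) * profit d n C Ps \<le> profit d n C Ps"
        proof -
        have "profit d n C Ps > 0" using pos by (simp add: prof)
        then show ?thesis using assms(2) by (simp add: algebra_simps)
      qed
      ultimately have "ppu d (C j0) = r * (1 - eps) ^ 0 \<and> profit d n C (C j0) \<ge> (1 - eps) * profit d n C Ps"
        using pr j0 by simp
      then show ?thesis by blast
    qed
  qed
qed

end
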